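(* There is a universal constant $C$ such that for every prime $p$, every positive integer $k$, every $\epsilon\in(0,1)$, and every $g\in\mathbb{Z}_p$, there is a $k$-party, one-round protocol using public randomness for the Sum-Equal problem over $\mathbb{Z}_p$ relative to $g$, with error at most $\epsilon$ and total communication complexity at most $k\log(k/\epsilon)+C\cdot k$.
   Context: Model: parties $P_1,\dots,P_k$ each hold an input $x_i\in\mathbb{Z}_p$; a coordinator (distinct from the parties) wants to compute $f(x_1,\dots,x_k)$. In a one-round protocol with public randomness, a random string $r$ is shared by all parties and the coordinator; each party sends a single message, depending only on its own input and $r$, to the coordinator, who outputs a value depending only on the received messages and $r$; there is no other communication. The protocol has error at most $\epsilon$ if for every input $(x_1,\dots,x_k)$ the probability over $r$ that the output differs from $f(x_1,\dots,x_k)$ is at most $\epsilon$. Total communication complexity is the maximum total number of bits sent by all parties. Sum-Equal relative to $g$: $f(x_1,\dots,x_k)=1$ if $\sum_i x_i\equiv g\pmod p$ and $0$ otherwise. $\log$ is base 2. *)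

theory Defs
  imports "HOL-Probability.Probability_Mass_Function" "HOL-Computational_Algebra.Primes"
begin

text \<open>Inputs of the k parties: x :: nat \<Rightarrow> nat, with x i \<in> {0..<p} representing Z_p.\<close>
definition valid_input :: "nat \<Rightarrow> nat \<Rightarrow> (nat \<Rightarrow> nat) \<Rightarrow> bool" where
  "valid_input p k x \<longleftrightarrow> (\<forall>i<k. x i < p)"

definition sum_equal :: "nat \<Rightarrow> nat \<Rightarrow> nat \<Rightarrow> (nat \<Rightarrow> nat) \<Rightarrow> bool" where
  "sum_equal p g k x \<longleftrightarrow> (\<Sum>i<k. x i) mod p = g mod p"

text \<open>One-round public-coin protocol: shared random string r drawn from R (a discrete
  distribution); party i sends the bit string enc i (x i) r; the coordinator outputs
  dec [msg_0,...,msg_{k-1}] r.\<close>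
definition one_round_protocol ::
  "nat \<Rightarrow> nat \<Rightarrow> ((nat \<Rightarrow> nat) \<Rightarrow> bool) \<Rightarrow> nat pmf \<Rightarrow> (nat \<Rightarrow> nat \<Rightarrow> nat \<Rightarrow> bool list)
   \<Rightarrow> (bool list list \<Rightarrow> nat \<Rightarrow> bool) \<Rightarrow> real \<Rightarrow> real \<Rightarrow> bool" where
  "one_round_protocol p k f R enc dec eps bits \<longleftrightarrow>
     (\<forall>x. valid_input p k x \<longrightarrow>
        measure_pmf.prob R {r. dec (map (\<lambda>i. enc i (x i) r) [0..<k]) r \<noteq> f x} \<le> eps) \<and>
     (\<forall>x r. valid_input p k x \<longrightarrow> r \<in> set_pmf R \<longrightarrow>
        real (\<Sum>i<k. length (enc i (x i) r)) \<le> bits)"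

end

theory Submission imports Defs begin

fun to_bits :: "nat \<Rightarrow> nat \<Rightarrow> bool list" where
  "to_bits 0 q = []"
| "to_bits (Suc b) q = odd q # to_bits b (q div 2)"

fun from_bits :: "bool list \<Rightarrow> nat" where
  "from_bits [] = 0"
| "from_bits (x # xs) = (if x then 1 else 0) + 2 * from_bits xs"

lemma length_to_bits[simp]: "length (to_bits b q) = b"
  by (induction b arbitrary: q) auto

lemma from_to_bits: "from_bits (to_bits b q) = q mod 2 ^ b"
proof (induction b arbitrary: q)
  case 0 then show ?case by simp
next
  case (Suc b)
  have "q mod 2 ^ Suc b = 2 * (q div 2 mod 2 ^ b) + q mod 2"
    using mod_mult2_eq[of q 2 "2^b"] by (simp add: ac_simps)
  then show ?case using Suc by (auto simp: odd_iff_mod_2_eq_one even_iff_mod_2_eq_zero)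
qed

lemma sum_bounds:
  fixes z :: "nat \<Rightarrow> nat" and M p k :: nat
  assumes "p > 0" "k > 0"
  shows "(\<Sum>i<k. z i * M div p) * p \<le> (\<Sum>i<k. z i) * M"
    and "(\<Sum>i<k. z i) * M < ((\<Sum>i<k. z i * M div p) + k) * p"
proof -
  have "(\<Sum>i<k. z i * M div p) * p = (\<Sum>i<k. z i * M div p * p)" by (simp add: sum_distrib_right)
  also have "\<dots> \<le> (\<Sum>i<k. z i * M)" by (rule sum_mono) (metis times_div_less_eq_dividend mult.commute)
  also have "\<dots> = (\<Sum>i<k. z i) * M" by (simp add: sum_distrib_right)
  finally show "(\<Sum>i<k. z i * M div p) * p \<le> (\<Sum>i<k. z i) * M" .
  have "(\<Sum>i<k. z i) * M = (\<Sum>i<k. z i * M)" by (simp add: sum_distrib_right)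
  also have "\<dots> < (\<Sum>i<k. (z i * M div p + 1) * p)"
  proof (rule sum_strict_mono)
    fix i
    have "z i * M = z i * M div p * p + z i * M mod p" by simp
    also have "\<dots> < z i * M div p * p + p" using assms(1) mod_less_divisor by (metis add_less_cancel_left)
    finally show "z i * M < (z i * M div p + 1) * p" by simp
  qed (use assms in auto)
  also have "\<dots> = ((\<Sum>i<k. z i * M div p) + k) * p" by (simp add: sum_distrib_right sum_distrib_left sum.distrib algebra_simps)
  finally show "(\<Sum>i<k. z i) * M < ((\<Sum>i<k. z i * M div p) + k) * p" .
qed

lemma accept_if_dvd:
  fixes Q S M p k j :: nat
  assumes "p > 0" "Q * p \<le> S * M" "S * M < (Q + k) * p" "S = j * p"
  shows "Q \<le> j * M \<and> j * M < Q + k"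
proof -
  have "Q * p \<le> (j * M) * p" using assms by (simp add: ac_simps)
  moreover have "(j * M) * p < (Q + k) * p" using assms by (simp add: ac_simps)
  ultimately show ?thesis using assms(1) by auto
qed

lemma close_if_accept:
  fixes Q S M p k j :: nat
  assumes "p > 0" "Q * p \<le> S * M" "S * M < (Q + k) * p" "Q \<le> j * M" "j * M < Q + k"
  shows "(S mod p) * M < k * p \<or> (p - S mod p) * M < k * p"
proof -
  define d where "d = int S - int j * int p"
  have A: "int Q * int p \<le> int S * int M" using assms(2) by (metis of_nat_le_iff of_nat_mult)
  have B: "int S * int M < (int Q + int k) * int p" using assms(3) by (metis of_nat_less_iff of_nat_mult of_nat_add)
  have C: "int Q \<le> int j * int M" using assms(4) by (metis of_nat_le_iff of_nat_mult)
  have D: "int j * int M + 1 \<le> int Q + int k" using assms(5) by (metis of_nat_less_iff of_nat_mult of_nat_add zless_imp_add1_zle)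
  have "(int Q + int k) * int p \<le> (int j * int M + int k) * int p" using C by (simp add: mult_right_mono)
  with B have up: "d * int M < int k * int p" unfolding d_def by (simp add: algebra_simps)
  have "(int j * int M - int k) * int p < int Q * int p"
    using D assms(1) by (intro mult_strict_right_mono) auto
  with A have lo: "- (int k * int p) < d * int M" unfolding d_def by (simp add: algebra_simps)
  have "d = int S + (- int j) * int p" unfolding d_def by simp
  then have "d mod int p = int S mod int p" by (simp only: mod_mult_self1)
  then have dm: "d mod int p = int (S mod p)" by (simp add: zmod_int)
  show ?thesis
  proof (cases "d \<ge> 0")
    case True
    have "int (S mod p) \<le> d" using dm True assms(1)
      by (metis zmod_le_nonneg_dividend)
    then have "int (S mod p) * int M \<le> d * int M" by (simp add: mult_right_mono)
    with up have "int (S mod p * M) < int (k * p)" by (simp only: of_nat_mult) 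
    then have "S mod p * M < k * p" by (simp only: of_nat_less_iff)
    then show ?thesis by blast
  next
    case False
    have "d = int p * (d div int p) + int (S mod p)" using dm by (metis div_mult_mod_eq mult.commute)
    moreover have "d div int p < 0" using False assms(1) by (simp add: div_neg_pos_less0)
    moreover have "int p * (d div int p) \<le> int p * (-1)"
      using \<open>d div int p < 0\<close> by (intro mult_left_mono) auto
    ultimately have "- d \<ge> int p - int (S mod p)" by linarith
    then have "(int p - int (S mod p)) * int M \<le> (- d) * int M" by (rule mult_right_mono) simp
    with lo have "(int p - int (S mod p)) * int M < int k * int p" by simp
    moreover have "S mod p \<le> p" using assms(1) by (simp add: less_imp_le)
    then have "int p - int (S mod p) = int (p - S mod p)" by (simp only: of_nat_diff)
    ultimately have "int ((p - S mod p) * M) < int (k * p)" by (simp only: of_nat_mult)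
    then have "(p - S mod p) * M < k * p" by (simp only: of_nat_less_iff)
    then show ?thesis by blast
  qed
qed

lemma card_B:
  fixes p M k :: nat
  assumes "M > 0"
  shows "card {r\<in>{1..<p}. r*M < k*p \<or> (p-r)*M < k*p} \<le> 2*(k*p div M)"
proof -
  let ?t = "k*p div M"
  have sub: "{r\<in>{1..<p}. r*M < k*p \<or> (p-r)*M < k*p} \<subseteq> {1..?t} \<union> {p - ?t..<p}"
  proof
    fix r assume r: "r \<in> {r\<in>{1..<p}. r*M < k*p \<or> (p-r)*M < k*p}"
    show "r \<in> {1..?t} \<union> {p - ?t..<p}"
    proof (cases "r*M < k*p")
      case True
      then have "r \<le> ?t" using assms by (simp add: less_imp_le_nat less_eq_div_iff_mult_less_eq)
      then show ?thesis using r by auto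
    next
      case False
      then have "(p-r)*M < k*p" using r by auto
      then have "p - r \<le> ?t" using assms by (simp add: less_imp_le_nat less_eq_div_iff_mult_less_eq)
      then show ?thesis using r by auto
    qed
  qed
  have "card {r\<in>{1..<p}. r*M < k*p \<or> (p-r)*M < k*p} \<le> card ({1..?t} \<union> {p - ?t..<p})"
    by (rule card_mono[OF _ sub]) auto
  also have "\<dots> \<le> card {1..?t} + card {p - ?t..<p}" by (rule card_Un_le)
  also have "\<dots> \<le> 2 * ?t" by simp
  finally show ?thesis .
qed

lemma inj_mult_mod:
  fixes p D :: nat
  assumes "prime p" "\<not> p dvd D"
  shows "inj_on (\<lambda>a. a*D mod p) {1..<p}"
proof (rule inj_onI)
  have key: "a1 = a2" if "a1 \<in> {1..<p}" "a2 \<in> {1..<p}" "a1 \<le> a2" "a1*D mod p = a2*D mod p" for a1 a2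
  proof -
    have "p dvd a2*D - a1*D" using that mod_eq_dvd_iff_nat[of "a1*D" "a2*D" p] by (simp add: mult_le_mono1)
    then have "p dvd (a2 - a1)*D" by (simp add: diff_mult_distrib)
    then have "p dvd (a2 - a1)" using assms prime_dvd_mult_iff by blast
    moreover have "a2 - a1 < p" using that by auto
    ultimately have "a2 - a1 = 0" using dvd_imp_le by (metis not_less zero_less_iff_neq_zero)
    then show ?thesis using that by simp
  qed
  fix a1 a2 assume "a1 \<in> {1..<p}" "a2 \<in> {1..<p}" "a1*D mod p = a2*D mod p"
  then show "a1 = a2" using key[of a1 a2] key[of a2 a1] by (cases "a1 \<le> a2") auto
qed

lemma dvd_shift:
  fixes s p g :: nat
  assumes "g < p"
  shows "p dvd (s + (p - g)) \<longleftrightarrow> s mod p = g"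
proof -
  define r where "r = s mod p"
  have rp: "r < p" using assms unfolding r_def by simp
  have e: "s + (p - g) = p * (s div p) + (r + (p - g))" unfolding r_def by simp
  have "p dvd (s + (p - g)) \<longleftrightarrow> p dvd (r + (p - g))" unfolding e using dvd_add_right_iff[OF dvd_triv_left[of p "s div p"], of "r + (p - g)"] by simp
  also have "\<dots> \<longleftrightarrow> r = g"
  proof
    assume "p dvd (r + (p - g))"
    then obtain c where c: "r + (p - g) = p * c" by (auto elim: dvdE)
    have "c \<noteq> 0"
    proof
      assume "c = 0" then have "r + (p - g) = 0" using c by simp
      then show False using assms by linarith
    qed
    then have "c > 0" by simp
    moreover have "p * c < p * 2" using c rp assms by linarith
    then have "c < 2" by simp
    ultimately have "c = 1" by auto
    then show "r = g" using c assms by auto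
  next
    assume "r = g" then show "p dvd (r + (p - g))" using assms by simp
  qed
  finally show ?thesis unfolding r_def .
qed

lemma protocol_exists:
  fixes p k g :: nat and eps :: real
  assumes pr: "prime p" and k0: "k > 0" and e0: "0 < eps" and e1: "eps < 1" and gp: "g < p"
  shows "\<exists>R enc dec. one_round_protocol p k (sum_equal p g k) R enc dec eps
                          (real k * log 2 (real k / eps) + 3 * real k)"
proof -
  define b :: nat where "b = nat \<lceil>log 2 (4 * real k / eps)\<rceil>"
  define M :: nat where "M = 2 ^ b"
  have p0: "p > 0" and p2: "p \<ge> 2" using prime_gt_1_nat[OF pr] by auto
  have M0: "M > 0" unfolding M_def by simp
  have pos: "4 * real k / eps > 0" using k0 e0 by simp
  have ge1: "4 * real k / eps > 1"
  proof -
    have "4 * real k \<ge> 4" using k0 by simp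
    then have "4 * real k > eps" using e1 by linarith
    then show ?thesis using e0 by simp
  qed
  have lg0: "log 2 (4 * real k / eps) > 0" using ge1 by simp
  have Mge: "real M \<ge> 4 * real k / eps"
  proof -
    have "4 * real k / eps = 2 powr (log 2 (4 * real k / eps))" using pos by simp
    also have "\<dots> \<le> 2 powr (real b)" unfolding b_def using lg0 by (intro powr_mono) auto
    also have "\<dots> = real M" unfolding M_def by (simp add: powr_realpow)
    finally show ?thesis .
  qed
  have bbound: "real b \<le> log 2 (real k / eps) + 3"
  proof -
    have "real b \<le> log 2 (4 * real k / eps) + 1" unfolding b_def using lg0 by linarith
    also have "log 2 (4 * real k / eps) = 2 + log 2 (real k / eps)"
    proof -
      have "4 * real k / eps = 4 * (real k / eps)" by simp
      also have "log 2 \<dots> = log 2 4 + log 2 (real k / eps)" using k0 e0 by (subst log_mult) auto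
      also have "log 2 (4::real) = 2"
        using log_pow_cancel[of "2::real" 2] by simp
      finally show ?thesis .
    qed
    finally show ?thesis by simp
  qed
  define y :: "nat \<Rightarrow> nat \<Rightarrow> nat" where "y i xi = xi + (if i = 0 then p - g else 0)" for i xi
  define z :: "nat \<Rightarrow> (nat \<Rightarrow> nat) \<Rightarrow> nat \<Rightarrow> nat" where "z a x i = a * y i (x i) mod p" for a x i
  define enc :: "nat \<Rightarrow> nat \<Rightarrow> nat \<Rightarrow> bool list" where
    "enc i xi a = to_bits b ((a * y i xi) mod p * M div p)" for i xi a
  define dec :: "bool list list \<Rightarrow> nat \<Rightarrow> bool" where
    "dec ms a = (\<exists>j. sum_list (map from_bits ms) \<le> j * M \<and> j * M < sum_list (map from_bits ms) + k)" for ms a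
  define R where "R = pmf_of_set {1..<p}"
  define B where "B = {r\<in>{1..<p}. r*M < k*p \<or> (p-r)*M < k*p}"
  have ne: "{1..<p} \<noteq> {}" using p2 by auto
  have setR: "set_pmf R = {1..<p}" unfolding R_def using ne by simp
  have Q_eq: "sum_list (map from_bits (map (\<lambda>i. enc i (x i) a) [0..<k])) = (\<Sum>i<k. z a x i * M div p)" for x a
  proof -
    have "sum_list (map from_bits (map (\<lambda>i. enc i (x i) a) [0..<k])) = (\<Sum>i\<in>set [0..<k]. from_bits (enc i (x i) a))"
      unfolding map_map comp_def by (rule interv_sum_list_conv_sum_set_nat)
    also have "\<dots> = (\<Sum>i<k. z a x i * M div p)"
    proof (rule sum.cong)
      show "set [0..<k] = {..<k}" by auto
    next
      fix i
      have "z a x i < p" unfolding z_def using p0 by simp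
      then have "z a x i * M < p * M" using M0 by simp
      then have "z a x i * M div p < M" using p0 by (simp add: div_less_iff_less_mult mult.commute)
      then show "from_bits (enc i (x i) a) = z a x i * M div p"
        unfolding enc_def from_to_bits z_def M_def[symmetric] by simp
    qed
    finally show ?thesis .
  qed
  have Smod: "(\<Sum>i<k. z a x i) mod p = a * ((\<Sum>i<k. x i) + (p - g)) mod p" for a x
  proof -
    have "(\<Sum>i<k. z a x i) mod p = (\<Sum>i<k. a * y i (x i)) mod p" unfolding z_def by (rule mod_sum_eq)
    also have "(\<Sum>i<k. a * y i (x i)) = a * (\<Sum>i<k. y i (x i))" by (simp add: sum_distrib_left)
    also have "(\<Sum>i<k. y i (x i)) = (\<Sum>i<k. x i) + (p - g)"
      unfolding y_def using k0 by (simp add: sum.distrib)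
    finally show ?thesis .
  qed
  have err: "measure_pmf.prob R {r. dec (map (\<lambda>i. enc i (x i) r) [0..<k]) r \<noteq> sum_equal p g k x} \<le> eps" for x
  proof -
    define D where "D = (\<Sum>i<k. x i) + (p - g)"
    define Err where "Err = {r. dec (map (\<lambda>i. enc i (x i) r) [0..<k]) r \<noteq> sum_equal p g k x}"
    have fx: "sum_equal p g k x \<longleftrightarrow> p dvd D" unfolding sum_equal_def D_def using dvd_shift[OF gp] gp by simp
    have bnds: "(\<Sum>i<k. z a x i * M div p) * p \<le> (\<Sum>i<k. z a x i) * M"
         "(\<Sum>i<k. z a x i) * M < ((\<Sum>i<k. z a x i * M div p) + k) * p" for a
      using sum_bounds[OF p0 k0, of "z a x" M] by auto
    have dvdS: "p dvd (\<Sum>i<k. z a x i) \<longleftrightarrow> p dvd D" if "a \<in> {1..<p}" for a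
    proof -
      have "p dvd (\<Sum>i<k. z a x i) \<longleftrightarrow> p dvd a * D" using Smod[of a x] unfolding D_def
        by (simp add: dvd_eq_mod_eq_0)
      also have "\<dots> \<longleftrightarrow> p dvd D" using that pr prime_dvd_mult_iff
        by (metis atLeastLessThan_iff dvd_imp_le less_le_trans not_less zero_less_one)
      finally show ?thesis .
    qed
    have card_bound: "card ({1..<p} \<inter> Err) \<le> card B"
    proof (cases "p dvd D")
      case True
      have "{1..<p} \<inter> Err = {}"
      proof (rule ccontr)
        assume "{1..<p} \<inter> Err \<noteq> {}"
        then obtain a where a: "a \<in> {1..<p}" "a \<in> Err" by blast
        obtain j where j: "(\<Sum>i<k. z a x i) = j * p" using dvdS[OF a(1)] True by (metis dvd_div_mult_self)
        have "dec (map (\<lambda>i. enc i (x i) a) [0..<k]) a"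
          unfolding dec_def Q_eq using accept_if_dvd[OF p0 bnds(1)[of a] bnds(2)[of a] j] by blast
        then show False using a(2) True fx unfolding Err_def by simp
      qed
      then show ?thesis by simp
    next
      case False
      have "{1..<p} \<inter> Err \<subseteq> {a\<in>{1..<p}. a * D mod p \<in> B}"
      proof
        fix a assume a: "a \<in> {1..<p} \<inter> Err"
        then have "dec (map (\<lambda>i. enc i (x i) a) [0..<k]) a" using False fx unfolding Err_def by auto
        then obtain j where j: "(\<Sum>i<k. z a x i * M div p) \<le> j * M" "j * M < (\<Sum>i<k. z a x i * M div p) + k"
          unfolding dec_def Q_eq by blast
        have cl: "((\<Sum>i<k. z a x i) mod p) * M < k * p \<or> (p - (\<Sum>i<k. z a x i) mod p) * M < k * p"
          by (rule close_if_accept[OF p0 bnds(1)[of a] bnds(2)[of a] j])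
        have nz: "(\<Sum>i<k. z a x i) mod p \<noteq> 0" using dvdS[of a] a False by (auto simp: dvd_eq_mod_eq_0)
        have eq: "(\<Sum>i<k. z a x i) mod p = a * D mod p" using Smod unfolding D_def by simp
        have "a * D mod p < p" using p0 by simp
        then show "a \<in> {a\<in>{1..<p}. a * D mod p \<in> B}" using a cl nz eq unfolding B_def
          by (auto simp: mult.commute)
      qed
      then have "card ({1..<p} \<inter> Err) \<le> card {a\<in>{1..<p}. a * D mod p \<in> B}"
        by (intro card_mono) auto
      also have "\<dots> \<le> card B"
      proof (rule card_inj_on_le)
        show "inj_on (\<lambda>a. a * D mod p) {a\<in>{1..<p}. a * D mod p \<in> B}"
          using inj_mult_mod[OF pr False] by (rule inj_on_subset) auto
        show "(\<lambda>a. a * D mod p) ` {a\<in>{1..<p}. a * D mod p \<in> B} \<subseteq> B" by auto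
        show "finite B" unfolding B_def by simp
      qed
      finally show ?thesis .
    qed
    have cB: "real (card B) \<le> 2 * real k * real p / real M"
    proof -
      have "card B \<le> 2 * (k * p div M)" unfolding B_def by (rule card_B[OF M0])
      then have "real (card B) \<le> 2 * real (k * p div M)" by simp
      also have "real (k * p div M) \<le> real (k * p) / real M" by (rule of_nat_div_le_of_nat)
      finally show ?thesis by simp
    qed
    have "measure_pmf.prob R Err = real (card ({1..<p} \<inter> Err)) / real (card {1..<p})"
      unfolding R_def using ne by (simp add: measure_pmf_of_set)
    also have "\<dots> \<le> real (card B) / real (p - 1)"
      using card_bound p2 by (simp add: divide_right_mono)
    also have "\<dots> \<le> (2 * real k * real p / real M) / real (p - 1)"
      using divide_right_mono[OF cB, of "real (p - 1)"] by simp
    also have "\<dots> \<le> eps"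
    proof -
      have pm: "real (p - 1) = real p - 1" using p2 by simp
      have p2r: "real p \<le> 2 * (real p - 1)" using p2 by simp
      have "real M * eps \<ge> 4 * real k" using Mge e0 by (simp add: divide_simps)
      have "2 * real k * real p \<le> 2 * real k * (2 * (real p - 1))" using p2r by (rule mult_left_mono) auto
      also have "\<dots> = 4 * real k * (real p - 1)" by simp
      also have "\<dots> \<le> real M * eps * (real p - 1)" using mult_right_mono[OF \<open>real M * eps \<ge> 4 * real k\<close>, of "real p - 1"] p2
        by simp
      finally have "2 * real k * real p \<le> eps * (real M * (real p - 1))" by (simp add: ac_simps)
      moreover have "real M * (real p - 1) > 0" using M0 p2 by simp
      ultimately have "2 * real k * real p / (real M * (real p - 1)) \<le> eps"
        by (simp only: pos_divide_le_eq)
      then show ?thesis unfolding pm by (simp add: divide_divide_eq_left)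
    qed
    finally show ?thesis unfolding Err_def .
  qed
  have bits: "real (\<Sum>i<k. length (enc i (x i) r)) \<le> real k * log 2 (real k / eps) + 3 * real k" for x r
  proof -
    have "real (\<Sum>i<k. length (enc i (x i) r)) = real k * real b" unfolding enc_def by simp
    also have "\<dots> \<le> real k * (log 2 (real k / eps) + 3)" using bbound by (rule mult_left_mono) auto
    finally show ?thesis by (simp add: distrib_left)
  qed
  have "one_round_protocol p k (sum_equal p g k) R enc dec eps
                          (real k * log 2 (real k / eps) + 3 * real k)"
    unfolding one_round_protocol_def
  proof (intro conjI allI impI)
    fix x assume "valid_input p k x"
    show "measure_pmf.prob R {r. dec (map (\<lambda>i. enc i (x i) r) [0..<k]) r \<noteq> sum_equal p g k x} \<le> eps"
      by (rule err)
  next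
    fix x r assume "valid_input p k x" "r \<in> set_pmf R"
    show "real (\<Sum>i<k. length (enc i (x i) r)) \<le> real k * log 2 (real k / eps) + 3 * real k"
      by (rule bits)
  qed
  then show ?thesis by (intro exI)
qed

theorem theorem4p3:
  shows "\<exists>C::real. \<forall>(p::nat) (k::nat) (eps::real) (g::nat).
           prime p \<longrightarrow> k > 0 \<longrightarrow> 0 < eps \<longrightarrow> eps < 1 \<longrightarrow> g < p \<longrightarrow>
           (\<exists>R enc dec. one_round_protocol p k (sum_equal p g k) R enc dec eps
                          (real k * log 2 (real k / eps) + C * real k))"
proof (rule exI[of _ 3], intro allI impI)
  fix p k :: nat and eps :: real and g :: nat
  assume "prime p" "k > 0" "0 < eps" "eps < 1" "g < p"
  then show "\<exists>R enc dec. one_round_protocol p k (sum_equal p g k) R enc dec eps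
                          (real k * log 2 (real k / eps) + 3 * real k)"
    by (rule protocol_exists)
qed

end
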